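(* Let $(X,d,\mu)$, $p$, $\underline{Q}_\mu$ be as in the context. Fix $\underline{\theta}\in[0,\min\{p,\underline{Q}_\mu\})$, $\theta\in[\underline{\theta},p)$, an integer $N\ge2$, numbers $0\le\theta_1<\dots<\theta_N=\underline{\theta}$, closed sets $S^i\in\mathcal{ADR}_{\theta_i}(X)$, and $\mathfrak m_k:=\sum_{i=1}^N2^{k(\theta-\theta_i)}\mathcal H_{\theta_i}\lfloor_{S^i}$, $k\in\mathbb N_0$. Then for each $c\ge1$ there is a constant $C>0$ such that for all $i,j\in\{1,\dots,N\}$, all $k\in\mathbb N_0$, all $(y,z)\in\Sigma^{i,j}_k$ and every $f\in L^{loc}_1(\mathfrak m_0)$, $$A^{i,j}_k(f)(y,z)\le C\,\mathcal E_{\mathfrak m_k}(f,B)$$ for every ball $B=cB_k(\underline x)$, $\underline x\in X$, satisfying $B\supset B_k(y)$ and $B\supset B_k(z)$.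
   Context: Standing setting: $(X,d)$ complete separable metric space, $\mu$ a Borel regular locally finite outer measure, $\operatorname{supp}\mu=X$, uniformly locally doubling (for every $R>0$, $\sup_{r\in(0,R]}\sup_x\mu(B_{2r}(x))/\mu(B_r(x))<\infty$). Balls are closed, $B_r(x)=\{y:d(x,y)\le r\}$, $cB_r(x)=B_{cr}(x)$, $B_k(x)=B_{2^{-k}}(x)$. A fixed $p\in(1,\infty)$; $X$ supports a weak local $(1,p)$-Poincaré inequality (for every $R>0$ there are $C,\lambda\ge1$ with $\inf_c\frac{1}{\mu(B_r(x))}\int_{B_r(x)}|f-c|d\mu\le Cr(\frac{1}{\mu(B_{\lambda r}(x))}\int_{B_{\lambda r}(x)}(\operatorname{lip}f)^pd\mu)^{1/p}$ for Lipschitz $f$, $x\in X$, $r\in(0,R]$). $\underline{Q}_\mu$ is the infimum of $Q>0$ such that for every $R>0$ there is $C$ with $(r_{B'}/r_B)^Q\le C\mu(B')/\mu(B)$ for balls $B'\subset B$, $0<r_{B'}\le r_B\le R$. Notation: $\mathrm{Av}_{G,\mathfrak m}(g)=\mathfrak m(G)^{-1}\int_Gg\,d\mathfrak m$ if $\mathfrak m(G)>0$, else $0$; $\mathcal E_{\mathfrak m}(g,G):=\inf_{c\in\mathbb R}\mathrm{Av}_{G,\mathfrak m}(|g-c|)$; $\mathfrak m\lfloor_S(E)=\mathfrak m(E\cap S)$. $\mathcal H_{\vartheta,\delta}(E):=\inf\{\sum\mu(B_{r_i}(x_i))r_i^{-\vartheta}:E\subset\bigcup B_{r_i}(x_i),0<r_i<\delta\}$,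 $\mathcal H_\vartheta=\lim_{\delta\to0}\mathcal H_{\vartheta,\delta}$. $\mathcal{ADR}_\vartheta(X)$: closed $S'$ with $\varkappa_1\mu(B_r(x))r^{-\vartheta}\le\mathcal H_\vartheta(B_r(x)\cap S')\le\varkappa_2\mu(B_r(x))r^{-\vartheta}$ for $x\in S'$, $r\in(0,1]$. $\Sigma^{i,j}_k:=\{(y,z)\in S^i\times S^j:d(y,z)\le2^{-k}\}$; $A^{i,j}_k(f)(y,z):=\mathrm{Av}_{B_k(y)\cap S^i,\mathcal H_{\theta_i}}\mathrm{Av}_{B_k(z)\cap S^j,\mathcal H_{\theta_j}}|f(y')-f(z')|$ (double mean over $y'$ and $z'$). *)

theory Defs
  imports "HOL-Analysis.Analysis"
begin

text \<open>The space X is the type 'a (class polish_space = complete separable metric space).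
  Balls are closed: cball x r. The measure mu is a measure on the Borel sets.\<close>

definition loc_finite_full_support :: "'a::metric_space measure \<Rightarrow> bool" where
  "loc_finite_full_support \<mu> \<longleftrightarrow> sets \<mu> = sets borel \<and>
     (\<forall>x. \<exists>r>0. emeasure \<mu> (cball x r) < \<infinity>) \<and>
     (\<forall>x r. r > 0 \<longrightarrow> emeasure \<mu> (cball x r) > 0)"

definition unif_loc_doubling :: "'a::metric_space measure \<Rightarrow> bool" where
  "unif_loc_doubling \<mu> \<longleftrightarrow> (\<forall>R>0. \<exists>D. \<forall>r x. 0 < r \<and> r \<le> R \<longrightarrow>
      emeasure \<mu> (cball x (2*r)) \<le> ennreal D * emeasure \<mu> (cball x r))"

text \<open>Mean value (with the convention Av = 0 if the measure of G is 0).\<close>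
definition Av :: "'a measure \<Rightarrow> 'a set \<Rightarrow> ('a \<Rightarrow> real) \<Rightarrow> real" where
  "Av M G g = (if emeasure M G > 0 then (\<integral>x. indicator G x * g x \<partial>M) / measure M G else 0)"

definition Osc :: "'a measure \<Rightarrow> ('a \<Rightarrow> real) \<Rightarrow> 'a set \<Rightarrow> real" where
  "Osc M g G = (INF c::real. Av M G (\<lambda>x. \<bar>g x - c\<bar>))"

definition lip :: "('a::metric_space \<Rightarrow> real) \<Rightarrow> 'a \<Rightarrow> real" where
  "lip f x = real_of_ereal (Liminf (at_right (0::real))
       (\<lambda>r. SUP y\<in>cball x r. ereal (\<bar>f y - f x\<bar> / r)))"

definition weak_local_poincare :: "'a::metric_space measure \<Rightarrow> real \<Rightarrow> bool" where
  "weak_local_poincare \<mu> p \<longleftrightarrow> (\<forall>R>0. \<exists>C lam. C \<ge> 1 \<and> lam \<ge> 1 \<and>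
      (\<forall>f x r. (\<exists>L. L-lipschitz_on UNIV f) \<and> 0 < r \<and> r \<le> R \<longrightarrow>
         Osc \<mu> f (cball x r) \<le> C * r * (Av \<mu> (cball x (lam*r)) (\<lambda>y. (lip f y) powr p)) powr (1/p)))"

definition Q_lower :: "'a::metric_space measure \<Rightarrow> real" where
  "Q_lower \<mu> = Inf {Q. Q > 0 \<and> (\<forall>R>0. \<exists>C. \<forall>x' r' x r.
       cball x' r' \<subseteq> cball x r \<and> 0 < r' \<and> r' \<le> r \<and> r \<le> R \<longrightarrow>
       (r'/r) powr Q \<le> C * measure \<mu> (cball x' r') / measure \<mu> (cball x r))}"

text \<open>Covers are countable families of balls, given as countable sets of (centre, radius) pairs
  (multiplicities only increase the sum, so this does not change the infimum).\<close>
definition H_delta :: "'a::metric_space measure \<Rightarrow> real \<Rightarrow> real \<Rightarrow> 'a set \<Rightarrow> ennreal" where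
  "H_delta \<mu> vt \<delta> E = (INF F\<in>{F. countable F \<and> E \<subseteq> (\<Union>(x,r)\<in>F. cball x r) \<and>
        (\<forall>(x,r)\<in>F. 0 < r \<and> r < \<delta>)}.
      \<integral>\<^sup>+ xr. ennreal (measure \<mu> (cball (fst xr) (snd xr)) * (snd xr) powr (-vt)) \<partial>count_space F)"

definition H_cod :: "'a::metric_space measure \<Rightarrow> real \<Rightarrow> 'a set \<Rightarrow> ennreal" where
  "H_cod \<mu> vt E = (SUP \<delta>\<in>{0<..}. H_delta \<mu> vt \<delta> E)"

text \<open>H_theta as a measure on the Borel sets (it is a metric outer measure).\<close>
definition H_meas :: "'a::metric_space measure \<Rightarrow> real \<Rightarrow> 'a measure" where
  "H_meas \<mu> vt = measure_of UNIV (sets borel) (H_cod \<mu> vt)"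

definition ADR :: "'a::metric_space measure \<Rightarrow> real \<Rightarrow> 'a set \<Rightarrow> bool" where
  "ADR \<mu> vt S \<longleftrightarrow> closed S \<and> (\<exists>\<kappa>1 \<kappa>2. 0 < \<kappa>1 \<and> 0 < \<kappa>2 \<and>
      (\<forall>x\<in>S. \<forall>r. 0 < r \<and> r \<le> 1 \<longrightarrow>
         ennreal (\<kappa>1 * measure \<mu> (cball x r) * r powr (-vt)) \<le> H_cod \<mu> vt (cball x r \<inter> S) \<and>
         H_cod \<mu> vt (cball x r \<inter> S) \<le> ennreal (\<kappa>2 * measure \<mu> (cball x r) * r powr (-vt))))"

definition m_k :: "'a::metric_space measure \<Rightarrow> nat \<Rightarrow> real \<Rightarrow> (nat \<Rightarrow> real) \<Rightarrow> (nat \<Rightarrow> 'a set)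
     \<Rightarrow> nat \<Rightarrow> 'a measure" where
  "m_k \<mu> N \<theta> th S k = measure_of UNIV (sets borel)
     (\<lambda>A. \<Sum>i\<in>{1..N}. ennreal (2 powr (real k * (\<theta> - th i))) * emeasure (H_meas \<mu> (th i)) (A \<inter> S i))"

definition loc_integrable :: "'a::metric_space measure \<Rightarrow> ('a \<Rightarrow> real) \<Rightarrow> bool" where
  "loc_integrable M f \<longleftrightarrow> (\<forall>x r. set_integrable M (cball x r) f)"

definition A_ijk :: "'a::metric_space measure \<Rightarrow> (nat \<Rightarrow> real) \<Rightarrow> (nat \<Rightarrow> 'a set) \<Rightarrow> nat \<Rightarrow> nat
     \<Rightarrow> nat \<Rightarrow> ('a \<Rightarrow> real) \<Rightarrow> 'a \<Rightarrow> 'a \<Rightarrow> real" where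
  "A_ijk \<mu> th S i j k f y z =
     Av (H_meas \<mu> (th i)) (cball y (2 powr (- real k)) \<inter> S i)
       (\<lambda>y'. Av (H_meas \<mu> (th j)) (cball z (2 powr (- real k)) \<inter> S j) (\<lambda>z'. \<bar>f y' - f z'\<bar>))"

end

theory Submission
  imports Defs
begin

lemma sigma_sets_borel: "sigma_sets UNIV (sets borel) = sets borel"
  by (metis sets.sigma_sets_eq space_borel)

lemma sets_H_meas[simp, measurable_cong]: "sets (H_meas \<mu> vt) = sets borel"
  unfolding H_meas_def by (simp add: sets_measure_of_conv sigma_sets_borel)

lemma space_H_meas[simp]: "space (H_meas \<mu> vt) = UNIV"
  unfolding H_meas_def by (simp add: space_measure_of_conv)

lemma emeasure_H_meas_le: "emeasure (H_meas \<mu> vt) A \<le> H_cod \<mu> vt A"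
  unfolding H_meas_def by (simp add: emeasure_measure_of_conv)

lemma emeasure_H_meas_pos: "emeasure (H_meas \<mu> vt) A > 0 \<Longrightarrow> emeasure (H_meas \<mu> vt) A = H_cod \<mu> vt A"
  unfolding H_meas_def by (simp add: emeasure_measure_of_conv split: if_splits)



lemma m_k_emeasure:
  assumes S: "\<And>l. l \<in> {1..N} \<Longrightarrow> S l \<in> sets borel"
  shows "sets (m_k \<mu> N \<theta> th S k) = sets borel"
    and "space (m_k \<mu> N \<theta> th S k) = UNIV"
    and "A \<in> sets borel \<Longrightarrow> emeasure (m_k \<mu> N \<theta> th S k) A =
       (\<Sum>i\<in>{1..N}. ennreal (2 powr (real k * (\<theta> - th i))) * emeasure (H_meas \<mu> (th i)) (A \<inter> S i))"
proof -
  show "sets (m_k \<mu> N \<theta> th S k) = sets borel"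
    unfolding m_k_def by (simp add: sets_measure_of_conv sigma_sets_borel)
  show "space (m_k \<mu> N \<theta> th S k) = UNIV"
    unfolding m_k_def by (simp add: space_measure_of_conv)
  assume A: "A \<in> sets borel"
  let ?f = "(\<lambda>A. \<Sum>i\<in>{1..N}. ennreal (2 powr (real k * (\<theta> - th i))) * emeasure (H_meas \<mu> (th i)) (A \<inter> S i))"
  have sa: "sigma_algebra UNIV (sets borel)"
    by (metis sets.sigma_algebra_axioms space_borel)
  have pos: "positive (sets borel) ?f" unfolding positive_def by simp
  have ca: "countably_additive (sets borel) ?f"
    unfolding countably_additive_def
  proof (intro allI impI)
    fix F :: "nat \<Rightarrow> 'a set"
    assume F: "range F \<subseteq> sets borel" "disjoint_family F" "\<Union> (range F) \<in> sets borel"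
    have "(\<Sum>n. ?f (F n)) = (\<Sum>i\<in>{1..N}. \<Sum>n. ennreal (2 powr (real k * (\<theta> - th i))) * emeasure (H_meas \<mu> (th i)) (F n \<inter> S i))"
      by (rule suminf_sum) simp
    also have "\<dots> = ?f (\<Union> (range F))"
    proof (rule sum.cong[OF refl])
      fix i assume i: "i \<in> {1..N}"
      have "(\<Sum>n. emeasure (H_meas \<mu> (th i)) (F n \<inter> S i)) = emeasure (H_meas \<mu> (th i)) (\<Union>n. F n \<inter> S i)"
        apply (rule suminf_emeasure)
        using F S[OF i] apply auto[1]
        using F(2) by (auto simp: disjoint_family_on_def)
      then show "(\<Sum>n. ennreal (2 powr (real k * (\<theta> - th i))) * emeasure (H_meas \<mu> (th i)) (F n \<inter> S i))
          = ennreal (2 powr (real k * (\<theta> - th i))) * emeasure (H_meas \<mu> (th i)) (\<Union> (range F) \<inter> S i)"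
        by (simp add: ennreal_suminf_cmult)
    qed
    finally show "(\<Sum>n. ?f (F n)) = ?f (\<Union> (range F))" .
  qed
  show "emeasure (m_k \<mu> N \<theta> th S k) A = ?f A"
    unfolding m_k_def by (rule emeasure_measure_of_sigma[OF sa pos ca A])
qed



locale msetting =
  fixes \<mu> :: "'a::metric_space measure"
  assumes lf: "loc_finite_full_support \<mu>" and dbl: "unif_loc_doubling \<mu>"
begin

lemma sets_mu[simp, measurable_cong]: "sets \<mu> = sets borel"
  using lf unfolding loc_finite_full_support_def by simp

lemma cball_meas[measurable]: "cball x r \<in> sets \<mu>" by simp

lemma doubling_iter:
  assumes "R0 > 0"
  shows "\<exists>D\<ge>1. \<forall>x \<rho> m. 0 < \<rho> \<and> 2^m * \<rho> \<le> R0 \<longrightarrow>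
     emeasure \<mu> (cball x (2^m * \<rho>)) \<le> ennreal (D^m) * emeasure \<mu> (cball x \<rho>)"
proof -
  obtain D0 where D0: "\<And>r x. 0 < r \<Longrightarrow> r \<le> R0 \<Longrightarrow>
      emeasure \<mu> (cball x (2*r)) \<le> ennreal D0 * emeasure \<mu> (cball x r)"
    using dbl assms unfolding unif_loc_doubling_def by blast
  define D where "D = max D0 1"
  have D: "emeasure \<mu> (cball x (2*r)) \<le> ennreal D * emeasure \<mu> (cball x r)" if "0 < r" "r \<le> R0" for r x
    using D0[OF that, of x] unfolding D_def
    by (meson dual_order.trans ennreal_leI max.cobounded1 mult_right_mono zero_le)
  have "emeasure \<mu> (cball x (2^m * \<rho>)) \<le> ennreal (D^m) * emeasure \<mu> (cball x \<rho>)"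
    if "0 < \<rho>" "2^m * \<rho> \<le> R0" for x \<rho> m
    using that
  proof (induction m)
    case 0 then show ?case by simp
  next
    case (Suc m)
    have le: "2^m * \<rho> \<le> R0" using Suc.prems by (simp add: mult.assoc) (smt (verit) mult_pos_pos zero_less_power)
    have "emeasure \<mu> (cball x (2^Suc m * \<rho>)) = emeasure \<mu> (cball x (2 * (2^m * \<rho>)))"
      by (simp add: mult.assoc)
    also have "\<dots> \<le> ennreal D * emeasure \<mu> (cball x (2^m * \<rho>))"
      using D[of "2^m*\<rho>" x] le Suc.prems by simp
    also have "\<dots> \<le> ennreal D * (ennreal (D^m) * emeasure \<mu> (cball x \<rho>))"
      using Suc.IH[OF Suc.prems(1) le] by (simp add: mult_left_mono)
    also have "\<dots> = ennreal (D^Suc m) * emeasure \<mu> (cball x \<rho>)"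
      unfolding D_def by (simp add: ennreal_mult mult.assoc)
    finally show ?case .
  qed
  moreover have "D \<ge> 1" unfolding D_def by simp
  ultimately show ?thesis by blast
qed

lemma cball_finite: "emeasure \<mu> (cball x \<rho>) < \<infinity>"
proof -
  obtain r0 where r0: "r0 > 0" "emeasure \<mu> (cball x r0) < \<infinity>"
    using lf unfolding loc_finite_full_support_def by blast
  obtain m :: nat where m: "\<rho> / r0 \<le> 2^m"
    using real_arch_pow[of 2 "\<rho>/r0"] by (smt (verit) one_less_numeral_iff semiring_norm(76))
  obtain D where D: "D \<ge> 1" "\<forall>x \<rho> m'. 0 < \<rho> \<and> 2^m' * \<rho> \<le> 2^m * r0 \<longrightarrow>
     emeasure \<mu> (cball x (2^m' * \<rho>)) \<le> ennreal (D^m') * emeasure \<mu> (cball x \<rho>)"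
    using doubling_iter[of "2^m * r0"] r0 by auto
  have "\<rho> \<le> 2^m * r0" using m r0 by (simp add: field_simps)
  then have "emeasure \<mu> (cball x \<rho>) \<le> emeasure \<mu> (cball x (2^m * r0))"
    by (intro emeasure_mono) auto
  also have "\<dots> \<le> ennreal (D^m) * emeasure \<mu> (cball x r0)" using D(2) r0 by simp
  also have "\<dots> < \<infinity>" using r0 by (simp add: ennreal_mult_less_top)
  finally show ?thesis .
qed

lemma cball_pos: "\<rho> > 0 \<Longrightarrow> emeasure \<mu> (cball x \<rho>) > 0"
  using lf unfolding loc_finite_full_support_def by blast

lemma emeasure_cball_eq: "emeasure \<mu> (cball x \<rho>) = ennreal (measure \<mu> (cball x \<rho>))"
  using cball_finite[of x \<rho>] by (simp add: emeasure_eq_ennreal_measure less_top)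

lemma measure_cball_pos: "\<rho> > 0 \<Longrightarrow> measure \<mu> (cball x \<rho>) > 0"
  using cball_pos[of \<rho> x] emeasure_cball_eq[of x \<rho>] by simp

lemma doubling_iter_real:
  assumes "R0 > 0"
  shows "\<exists>D\<ge>1. \<forall>x \<rho> m. 0 < \<rho> \<and> 2^m * \<rho> \<le> R0 \<longrightarrow>
     measure \<mu> (cball x (2^m * \<rho>)) \<le> D^m * measure \<mu> (cball x \<rho>)"
proof -
  obtain D where D: "D \<ge> 1" "\<forall>x \<rho> m. 0 < \<rho> \<and> 2^m * \<rho> \<le> R0 \<longrightarrow>
     emeasure \<mu> (cball x (2^m * \<rho>)) \<le> ennreal (D^m) * emeasure \<mu> (cball x \<rho>)"
    using doubling_iter[OF assms] by blast
  have "measure \<mu> (cball x (2^m * \<rho>)) \<le> D^m * measure \<mu> (cball x \<rho>)"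
    if "0 < \<rho>" "2^m * \<rho> \<le> R0" for x \<rho> m
    using D(2) that D(1) unfolding emeasure_cball_eq
    by (simp add: ennreal_mult[symmetric])
  then show ?thesis using D(1) by blast
qed

end


definition sep :: "real \<Rightarrow> 'a::metric_space set \<Rightarrow> bool" where
  "sep s W \<longleftrightarrow> (\<forall>w\<in>W. \<forall>w'\<in>W. w \<noteq> w' \<longrightarrow> s < dist w w')"

lemma maxsep:
  assumes s: "s \<ge> 0" and bnd: "\<And>W. finite W \<Longrightarrow> W \<subseteq> E \<Longrightarrow> sep s W \<Longrightarrow> card W \<le> Mx"
  shows "\<exists>W. finite W \<and> W \<subseteq> E \<and> card W \<le> Mx \<and> E \<subseteq> (\<Union>w\<in>W. cball w s)"
proof -
  let ?P = "\<lambda>W. finite W \<and> W \<subseteq> E \<and> sep s W"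
  have "\<exists>W. ?P W \<and> (\<forall>V. ?P V \<longrightarrow> card V \<le> card W)"
    apply (rule Lattices_Big.ex_has_greatest_nat[where k="{}" and b="Suc Mx"])
    using bnd by (auto simp: sep_def le_imp_less_Suc)
  then obtain W where W: "?P W" "\<And>V. ?P V \<Longrightarrow> card V \<le> card W" by blast
  have "E \<subseteq> (\<Union>w\<in>W. cball w s)"
  proof
    fix e assume e: "e \<in> E"
    show "e \<in> (\<Union>w\<in>W. cball w s)"
    proof (rule ccontr)
      assume "e \<notin> (\<Union>w\<in>W. cball w s)"
      then have far: "\<forall>w\<in>W. s < dist w e" by (auto simp: dist_commute)
      have eW: "e \<notin> W" using far s by (metis dist_self not_less)
      have "?P (insert e W)" using W(1) e far unfolding sep_def by (auto simp: dist_commute)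
      then have "card (insert e W) \<le> card W" by (rule W(2))
      then show False using eW W(1) by simp
    qed
  qed
  then show ?thesis using W(1) bnd by blast
qed

context msetting begin

lemma packing:
  assumes s: "s > 0" and W: "finite W" "W \<subseteq> cball x R" "sep s W" and Dm: "Dm \<ge> 0"
    and D: "\<And>w. w \<in> W \<Longrightarrow> measure \<mu> (cball x (R + s/3)) \<le> Dm * measure \<mu> (cball w (s/3))"
  shows "real (card W) \<le> Dm"
proof (cases "W = {}")
  case True then show ?thesis using Dm by simp
next
  case False
  then obtain w0 where "w0 \<in> W" by blast
  then have "dist x w0 \<le> R" using W(2) by auto
  then have R: "R \<ge> 0" using zero_le_dist[of x w0] by linarith
  define V where "V = measure \<mu> (cball x (R + s/3))"
  have V: "V > 0" unfolding V_def using R s by (intro measure_cball_pos) simp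
  have disj: "disjoint_family_on (\<lambda>w. cball w (s/3)) W"
    unfolding disjoint_family_on_def
  proof (intro ballI impI)
    fix a b assume ab: "a \<in> W" "b \<in> W" "a \<noteq> b"
    then have "s < dist a b" using W(3) unfolding sep_def by blast
    show "cball a (s/3) \<inter> cball b (s/3) = {}"
    proof (rule ccontr)
      assume "cball a (s/3) \<inter> cball b (s/3) \<noteq> {}"
      then obtain z where "dist a z \<le> s/3" "dist b z \<le> s/3" by auto
      moreover have "dist a b \<le> dist a z + dist b z" by (rule dist_triangle2)
      ultimately show False using \<open>s < dist a b\<close> s by linarith
    qed
  qed
  have "(\<Sum>w\<in>W. measure \<mu> (cball w (s/3))) = measure \<mu> (\<Union>w\<in>W. cball w (s/3))"
  proof (rule measure_finite_Union[symmetric])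
    show "finite W" by (rule W(1))
    show "(\<lambda>w. cball w (s/3)) ` W \<subseteq> sets \<mu>" by auto
    show "disjoint_family_on (\<lambda>w. cball w (s/3)) W" by (rule disj)
    show "emeasure \<mu> (cball w (s/3)) \<noteq> \<infinity>" for w using cball_finite[of w "s/3"] by simp
  qed
  also have "\<dots> \<le> V" unfolding V_def
  proof (rule measure_mono_fmeasurable)
    show "(\<Union>w\<in>W. cball w (s/3)) \<subseteq> cball x (R + s/3)"
    proof (safe)
      fix w z assume wz: "w \<in> W" "z \<in> cball w (s/3)"
      have "w \<in> cball x R" using W(2) wz(1) by blast
      then have "dist x w \<le> R" by simp
      moreover have "dist x z \<le> dist x w + dist w z" by (rule dist_triangle)
      moreover have "dist w z \<le> s/3" using wz(2) by simp
      ultimately show "z \<in> cball x (R + s/3)" unfolding mem_cball by linarith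
    qed
    show "(\<Union>w\<in>W. cball w (s/3)) \<in> sets \<mu>" using W(1) by (intro sets.finite_UN) simp_all
    show "cball x (R + s / 3) \<in> fmeasurable \<mu>" using cball_finite[of x "R + s/3"] by (simp add: fmeasurable_def)
  qed
  finally have sum: "(\<Sum>w\<in>W. measure \<mu> (cball w (s/3))) \<le> V" .
  have "real (card W) * V = (\<Sum>w\<in>W. V)" by simp
  also have "\<dots> \<le> (\<Sum>w\<in>W. Dm * measure \<mu> (cball w (s/3)))"
    by (rule sum_mono) (use D in \<open>simp add: V_def\<close>)
  also have "\<dots> = Dm * (\<Sum>w\<in>W. measure \<mu> (cball w (s/3)))" by (simp add: sum_distrib_left)
  also have "\<dots> \<le> Dm * V" using sum Dm by (simp add: mult_left_mono)
  finally show ?thesis using V by (rule mult_right_le_imp_le)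
qed

end


locale big = msetting \<mu> for \<mu> :: "'a::metric_space measure" +
  fixes N :: nat and th :: "nat \<Rightarrow> real" and S :: "nat \<Rightarrow> 'a set" and c \<kappa>1 \<kappa>2 D :: real and m :: nat
  assumes th_nn: "\<And>l. l \<in> {1..N} \<Longrightarrow> 0 \<le> th l"
    and S_closed: "\<And>l. l \<in> {1..N} \<Longrightarrow> closed (S l)"
    and c1: "1 \<le> c"
    and k1: "0 < \<kappa>1" and k2: "0 < \<kappa>2"
    and lowb: "\<And>l x r. l \<in> {1..N} \<Longrightarrow> x \<in> S l \<Longrightarrow> 0 < r \<Longrightarrow> r \<le> 1 \<Longrightarrow>
         ennreal (\<kappa>1 * measure \<mu> (cball x r) * r powr (- th l)) \<le> H_cod \<mu> (th l) (cball x r \<inter> S l)"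
    and upb: "\<And>l x r. l \<in> {1..N} \<Longrightarrow> x \<in> S l \<Longrightarrow> 0 < r \<Longrightarrow> r \<le> 1 \<Longrightarrow>
         H_cod \<mu> (th l) (cball x r \<inter> S l) \<le> ennreal (\<kappa>2 * measure \<mu> (cball x r) * r powr (- th l))"
    and m9: "9 * c \<le> 2^m"
    and D1: "1 \<le> D"
    and Ddbl: "\<And>x \<rho> j. 0 < \<rho> \<Longrightarrow> 2^j * \<rho> \<le> 2^m \<Longrightarrow>
         measure \<mu> (cball x (2^j * \<rho>)) \<le> D^j * measure \<mu> (cball x \<rho>)"
begin

lemma S_borel[measurable]: "l \<in> {1..N} \<Longrightarrow> S l \<in> sets borel"
  using S_closed by simp

lemma mono_meas: "A \<subseteq> cball x \<rho> \<Longrightarrow> A \<in> sets borel \<Longrightarrow> measure \<mu> A \<le> measure \<mu> (cball x \<rho>)"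
  by (rule measure_mono_fmeasurable) (use cball_finite[of x \<rho>] in \<open>auto simp: fmeasurable_def\<close>)

lemma cover_sets:
  assumes r: "0 < r" "r \<le> 1"
  shows "\<exists>W. finite W \<and> W \<subseteq> cball x (c*r) \<inter> S l \<and> real (card W) \<le> D^m \<and>
      cball x (c*r) \<inter> S l \<subseteq> (\<Union>w\<in>W. cball w r)"
proof -
  have "\<exists>W. finite W \<and> W \<subseteq> cball x (c*r) \<inter> S l \<and> card W \<le> nat \<lfloor>D^m\<rfloor> \<and>
      cball x (c*r) \<inter> S l \<subseteq> (\<Union>w\<in>W. cball w r)"
  proof (rule maxsep)
    show "0 \<le> r" using r by simp
    fix W assume W: "finite W" "W \<subseteq> cball x (c*r) \<inter> S l" "sep r W"
    have "real (card W) \<le> D^m"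
    proof (rule packing[where R="c*r"])
      show "0 < r" "finite W" "sep r W" by (fact r W)+
      show "W \<subseteq> cball x (c*r)" using W by blast
      show "0 \<le> D^m" using D1 by simp
      fix w assume w: "w \<in> W"
      then have dw: "dist x w \<le> c*r" using W by auto
      have "measure \<mu> (cball x (c*r + r/3)) \<le> measure \<mu> (cball w (2^m * (r/3)))"
      proof (rule mono_meas)
        show "cball x (c * r + r / 3) \<subseteq> cball w (2 ^ m * (r / 3))"
        proof
          fix z assume "z \<in> cball x (c * r + r / 3)"
          then have "dist x z \<le> c*r + r/3" by simp
          moreover have "dist w z \<le> dist x w + dist x z" by (rule dist_triangle3)
          moreover have "2*c*r + r/3 \<le> 2^m * (r/3)"
          proof -
            have "(6*c+1) * r \<le> 2^m * r" using m9 c1 r by (intro mult_right_mono) linarith+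
            then show ?thesis by (simp add: algebra_simps)
          qed
          ultimately show "z \<in> cball w (2 ^ m * (r / 3))" using dw by simp
        qed
      qed simp
      also have "\<dots> \<le> D^m * measure \<mu> (cball w (r/3))"
        by (rule Ddbl) (use r in auto)
      finally show "measure \<mu> (cball x (c*r + r/3)) \<le> D^m * measure \<mu> (cball w (r/3))" .
    qed
    then show "card W \<le> nat \<lfloor>D^m\<rfloor>" by (rule le_nat_floor)
  qed
  then obtain W where W: "finite W" "W \<subseteq> cball x (c*r) \<inter> S l" "card W \<le> nat \<lfloor>D^m\<rfloor>"
      "cball x (c*r) \<inter> S l \<subseteq> (\<Union>w\<in>W. cball w r)" by blast
  have "real (card W) \<le> real (nat \<lfloor>D^m\<rfloor>)" using W(3) by simp
  also have "\<dots> = of_int \<lfloor>D^m\<rfloor>" using D1 by simp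
  also have "\<dots> \<le> D^m" by simp
  finally have "real (card W) \<le> D^m" .
  then show ?thesis using W by blast
qed


lemma Hbound:
  assumes l: "l \<in> {1..N}" and r: "0 < r" "r \<le> 1" and y: "y \<in> cball x (c*r)"
  shows "emeasure (H_meas \<mu> (th l)) (cball x (c*r) \<inter> S l)
     \<le> ennreal (D^m * (\<kappa>2 * (D^m * measure \<mu> (cball y r)) * r powr (- th l)))"
proof -
  obtain W where W: "finite W" "W \<subseteq> cball x (c*r) \<inter> S l" "real (card W) \<le> D^m"
      "cball x (c*r) \<inter> S l \<subseteq> (\<Union>w\<in>W. cball w r)"
    using cover_sets[OF r, of x l] by (elim exE conjE) blast
  define K where "K = \<kappa>2 * (D^m * measure \<mu> (cball y r)) * r powr (- th l)"
  have K0: "0 \<le> K" unfolding K_def using k2 D1 by simp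
  let ?H = "H_meas \<mu> (th l)"
  have measb: "\<And>w. cball w r \<inter> S l \<in> sets borel" using S_borel[OF l] by simp
  then have meas: "\<And>w. cball w r \<inter> S l \<in> sets ?H" by simp
  have "emeasure ?H (cball x (c*r) \<inter> S l) \<le> emeasure ?H (\<Union>w\<in>W. cball w r \<inter> S l)"
  proof (rule emeasure_mono)
    show "cball x (c*r) \<inter> S l \<subseteq> (\<Union>w\<in>W. cball w r \<inter> S l)"
    proof
      fix z assume z: "z \<in> cball x (c*r) \<inter> S l"
      then obtain w where "w \<in> W" "z \<in> cball w r" using W(4) by blast
      then show "z \<in> (\<Union>w\<in>W. cball w r \<inter> S l)" using z by blast
    qed
    show "(\<Union>w\<in>W. cball w r \<inter> S l) \<in> sets ?H"
      using W(1) by (rule sets.finite_UN) (use meas in blast)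
  qed
  also have "\<dots> \<le> (\<Sum>w\<in>W. emeasure ?H (cball w r \<inter> S l))"
    by (rule emeasure_subadditive_finite[OF W(1)]) (simp add: image_subset_iff measb)
  also have "\<dots> \<le> (\<Sum>w\<in>W. ennreal K)"
  proof (rule sum_mono)
    fix w assume w: "w \<in> W"
    have "emeasure ?H (cball w r \<inter> S l) \<le> H_cod \<mu> (th l) (cball w r \<inter> S l)"
      by (rule emeasure_H_meas_le)
    also have "\<dots> \<le> ennreal (\<kappa>2 * measure \<mu> (cball w r) * r powr (- th l))"
      using w W(2) by (intro upb[OF l _ r]) blast
    also have "\<dots> \<le> ennreal K" unfolding K_def
    proof (rule ennreal_leI, rule mult_right_mono, rule mult_left_mono)
      have dyw: "dist y w \<le> 2*c*r"
      proof -
        have "w \<in> cball x (c*r)" using w W(2) by blast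
        then have "dist x w \<le> c*r" "dist x y \<le> c*r" using y by simp_all
        moreover have "dist y w \<le> dist x y + dist x w" by (rule dist_triangle3)
        ultimately show ?thesis by simp
      qed
      have "measure \<mu> (cball w r) \<le> measure \<mu> (cball y (2^m * r))"
      proof (rule mono_meas)
        show "cball w r \<subseteq> cball y (2^m * r)"
        proof
          fix z assume "z \<in> cball w r"
          then have "dist w z \<le> r" by simp
          moreover have "dist y z \<le> dist y w + dist w z" by (rule dist_triangle)
          moreover have "(2*c+1) * r \<le> 2^m * r" using m9 c1 r by (intro mult_right_mono) linarith+
          moreover have "(2*c+1)*r = 2*c*r + r" by (simp add: algebra_simps)
          ultimately have "dist y z \<le> 2^m*r" using dyw by linarith
          then show "z \<in> cball y (2^m * r)" by simp
        qed
      qed simp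
      also have "\<dots> \<le> D^m * measure \<mu> (cball y r)" by (rule Ddbl) (use r in auto)
      finally show "measure \<mu> (cball w r) \<le> D^m * measure \<mu> (cball y r)" .
    qed (use k2 in simp_all)
    finally show "emeasure ?H (cball w r \<inter> S l) \<le> ennreal K" .
  qed
  also have "\<dots> = ennreal (real (card W) * K)"
    using K0 by (simp add: ennreal_mult ennreal_of_nat_eq_real_of_nat)
  also have "\<dots> \<le> ennreal (D^m * K)"
    using W(3) K0 by (intro ennreal_leI mult_right_mono) auto
  finally show ?thesis unfolding K_def .
qed

end


context big begin

definition wt :: "real \<Rightarrow> nat \<Rightarrow> nat \<Rightarrow> real" where
  "wt \<theta> k l = 2 powr (real k * (\<theta> - th l))"

abbreviation MM :: "real \<Rightarrow> nat \<Rightarrow> 'a measure" where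
  "MM \<theta> k \<equiv> m_k \<mu> N \<theta> th S k"

lemma MM_sets[simp, measurable_cong]: "sets (MM \<theta> k) = sets borel"
  and MM_space[simp]: "space (MM \<theta> k) = UNIV"
  using m_k_emeasure[of N S] S_borel by auto

lemma MM_emeasure: "A \<in> sets borel \<Longrightarrow>
   emeasure (MM \<theta> k) A = (\<Sum>l\<in>{1..N}. ennreal (wt \<theta> k l) * emeasure (H_meas \<mu> (th l)) (A \<inter> S l))"
  using m_k_emeasure(3)[of N S] S_borel unfolding wt_def by auto

lemma wt0[simp]: "wt \<theta> 0 l = 1" unfolding wt_def by simp

lemma wt_pos: "wt \<theta> k l > 0" unfolding wt_def by simp

lemma dom1:
  assumes l: "l \<in> {1..N}" and h: "h \<in> borel_measurable borel"
  shows "ennreal (wt \<theta> k l) * (\<integral>\<^sup>+ x. indicator (S l) x * h x \<partial>H_meas \<mu> (th l)) \<le> integral\<^sup>N (MM \<theta> k) h"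
proof -
  let ?Q = "scale_measure (ennreal (wt \<theta> k l)) (density (H_meas \<mu> (th l)) (indicator (S l)))"
  have hH: "h \<in> borel_measurable (H_meas \<mu> (th l))" using h by simp
  have iS: "(indicator (S l) :: 'a \<Rightarrow> ennreal) \<in> borel_measurable (H_meas \<mu> (th l))"
    using S_borel[OF l] by simp
  have le: "?Q \<le> MM \<theta> k"
    unfolding le_measure_iff
  proof (simp add: space_scale_measure le_fun_def, intro allI)
    fix A
    show "ennreal (wt \<theta> k l) * emeasure (density (H_meas \<mu> (th l)) (indicator (S l))) A \<le> emeasure (MM \<theta> k) A"
    proof (cases "A \<in> sets borel")
      case True
      have "emeasure (density (H_meas \<mu> (th l)) (indicator (S l))) A = emeasure (H_meas \<mu> (th l)) (S l \<inter> A)"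
        by (rule emeasure_restricted) (use True S_borel[OF l] in simp_all)
      also have "\<dots> = emeasure (H_meas \<mu> (th l)) (A \<inter> S l)" by (simp add: Int_commute)
      finally have e: "emeasure (density (H_meas \<mu> (th l)) (indicator (S l))) A = emeasure (H_meas \<mu> (th l)) (A \<inter> S l)" .
      show ?thesis unfolding e MM_emeasure[OF True]
        by (rule member_le_sum[where i=l, OF l]) simp_all
    next
      case False
      then show ?thesis by (simp add: emeasure_notin_sets)
    qed
  qed
  have "integral\<^sup>N ?Q h = ennreal (wt \<theta> k l) * integral\<^sup>N (density (H_meas \<mu> (th l)) (indicator (S l))) h"
    by (rule nn_integral_scale_measure) (simp add: hH)
  also have "integral\<^sup>N (density (H_meas \<mu> (th l)) (indicator (S l))) h = (\<integral>\<^sup>+ x. indicator (S l) x * h x \<partial>H_meas \<mu> (th l))"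
    by (rule nn_integral_density[OF iS hH])
  finally have "integral\<^sup>N ?Q h = ennreal (wt \<theta> k l) * (\<integral>\<^sup>+ x. indicator (S l) x * h x \<partial>H_meas \<mu> (th l))" .
  moreover have "integral\<^sup>N ?Q h \<le> integral\<^sup>N (MM \<theta> k) h"
    by (rule nn_integral_mono_measure[OF _ le]) simp
  ultimately show ?thesis by simp
qed

lemma dom2:
  assumes h: "h \<in> borel_measurable borel"
  shows "integral\<^sup>N (MM \<theta> k) h \<le> ennreal (\<Sum>l\<in>{1..N}. wt \<theta> k l) * integral\<^sup>N (MM \<theta> 0) h"
proof -
  let ?W = "\<Sum>l\<in>{1..N}. wt \<theta> k l"
  have em: "emeasure (MM \<theta> k) \<le> emeasure (scale_measure (ennreal ?W) (MM \<theta> 0))"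
  proof (rule le_funI)
    fix A
    show "emeasure (MM \<theta> k) A \<le> emeasure (scale_measure (ennreal ?W) (MM \<theta> 0)) A"
      unfolding emeasure_scale_measure
    proof (cases "A \<in> sets borel")
      case True
      have "emeasure (MM \<theta> k) A = (\<Sum>l\<in>{1..N}. ennreal (wt \<theta> k l) * emeasure (H_meas \<mu> (th l)) (A \<inter> S l))"
        by (rule MM_emeasure[OF True])
      also have "\<dots> \<le> (\<Sum>l\<in>{1..N}. ennreal ?W * emeasure (H_meas \<mu> (th l)) (A \<inter> S l))"
      proof (rule sum_mono, rule mult_right_mono)
        fix l assume l: "l \<in> {1..N}"
        have "wt \<theta> k l \<le> ?W" by (rule member_le_sum[OF l]) (simp_all add: wt_pos less_imp_le)
        then show "ennreal (wt \<theta> k l) \<le> ennreal ?W" by (rule ennreal_leI)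
      qed simp
      also have "\<dots> = ennreal ?W * emeasure (MM \<theta> 0) A"
        unfolding MM_emeasure[OF True] by (simp add: sum_distrib_left)
      finally show "emeasure (MM \<theta> k) A \<le> ennreal ?W * emeasure (MM \<theta> 0) A" .
    next
      case False
      then show "emeasure (MM \<theta> k) A \<le> ennreal ?W * emeasure (MM \<theta> 0) A" by (simp add: emeasure_notin_sets)
    qed
  qed
  have le: "MM \<theta> k \<le> scale_measure (ennreal ?W) (MM \<theta> 0)"
    unfolding le_measure_iff using em by (simp add: space_scale_measure)
  have "integral\<^sup>N (MM \<theta> k) h \<le> integral\<^sup>N (scale_measure (ennreal ?W) (MM \<theta> 0)) h"
    by (rule nn_integral_mono_measure[OF _ le]) simp
  also have "\<dots> = ennreal ?W * integral\<^sup>N (MM \<theta> 0) h"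
    by (rule nn_integral_scale_measure) (use h in simp)
  finally show ?thesis .
qed

end


context big begin

lemma wt_powr: "wt \<theta> k l * (2 powr (- real k)) powr (- th l) = 2 powr (real k * \<theta>)"
proof -
  have "(2 powr (- real k)) powr (- th l) = 2 powr (real k * th l)"
    by (simp add: powr_powr)
  then show ?thesis unfolding wt_def by (simp add: powr_add[symmetric] algebra_simps)
qed

lemma r_props: "0 < (2::real) powr (- real k)" "(2::real) powr (- real k) \<le> 1"
  using powr_mono[of "- real k" 0 "2::real"] by simp_all

lemma Mbound:
  assumes y: "y \<in> cball x (c * 2 powr (- real k))"
  shows "emeasure (MM \<theta> k) (cball x (c * 2 powr (- real k)))
     \<le> ennreal (real N * (D^m * (\<kappa>2 * (D^m * measure \<mu> (cball y (2 powr (- real k))))) * 2 powr (real k * \<theta>)))"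
proof -
  let ?r = "2 powr (- real k) :: real"
  define Q where "Q = D^m * (\<kappa>2 * (D^m * measure \<mu> (cball y ?r)))"
  have Q0: "0 \<le> Q" unfolding Q_def using D1 k2 by simp
  have "emeasure (MM \<theta> k) (cball x (c * ?r)) =
     (\<Sum>l\<in>{1..N}. ennreal (wt \<theta> k l) * emeasure (H_meas \<mu> (th l)) (cball x (c * ?r) \<inter> S l))"
    by (rule MM_emeasure) simp
  also have "\<dots> \<le> (\<Sum>l\<in>{1..N}. ennreal (Q * 2 powr (real k * \<theta>)))"
  proof (rule sum_mono)
    fix l assume l: "l \<in> {1..N}"
    have "ennreal (wt \<theta> k l) * emeasure (H_meas \<mu> (th l)) (cball x (c * ?r) \<inter> S l)
        \<le> ennreal (wt \<theta> k l) * ennreal (Q * ?r powr (- th l))"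
      using Hbound[OF l r_props y] unfolding Q_def
      by (intro mult_left_mono) (simp_all add: mult.assoc)
    also have "\<dots> = ennreal (Q * (wt \<theta> k l * ?r powr (- th l)))"
      using Q0 wt_pos[of \<theta> k l] by (simp add: ennreal_mult[symmetric] algebra_simps)
    also have "\<dots> = ennreal (Q * 2 powr (real k * \<theta>))" by (simp add: wt_powr)
    finally show "ennreal (wt \<theta> k l) * emeasure (H_meas \<mu> (th l)) (cball x (c * ?r) \<inter> S l)
        \<le> ennreal (Q * 2 powr (real k * \<theta>))" .
  qed
  also have "\<dots> = ennreal (real N * (Q * 2 powr (real k * \<theta>)))"
    using Q0 by (simp add: ennreal_mult ennreal_of_nat_eq_real_of_nat)
  finally show ?thesis unfolding Q_def by (simp add: mult.assoc)
qed

lemma Mfinite: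
  assumes y: "y \<in> cball x (c * 2 powr (- real k))"
  shows "emeasure (MM \<theta> k) (cball x (c * 2 powr (- real k))) < \<infinity>"
  using Mbound[OF y, of \<theta>] by (rule le_less_trans) simp

end


lemma integral_le_nonneg:
  fixes u v :: "'a \<Rightarrow> real"
  assumes "\<And>x. 0 \<le> u x" "\<And>x. u x \<le> v x" "integrable M v"
  shows "integral\<^sup>L M u \<le> integral\<^sup>L M v"
proof (cases "integrable M u")
  case True then show ?thesis using assms by (intro integral_mono) auto
next
  case False
  then have "integral\<^sup>L M u = 0" by (rule not_integrable_integral_eq)
  moreover have "0 \<le> integral\<^sup>L M v"
  proof (intro integral_nonneg_AE AE_I2)
    fix x show "0 \<le> v x" using assms(1,2)[of x] by linarith
  qed
  ultimately show ?thesis by simp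
qed

lemma Av_nonneg:
  assumes "\<And>x. x \<in> G \<Longrightarrow> 0 \<le> h x"
  shows "0 \<le> Av K G h"
proof -
  have "0 \<le> (\<integral>x. indicator G x * h x \<partial>K)"
  proof (intro integral_nonneg_AE AE_I2)
    fix x show "0 \<le> indicator G x * h x" using assms[of x] by (simp add: indicator_def)
  qed
  then show ?thesis unfolding Av_def by simp
qed

lemma Av_mono_plus:
  assumes G: "G \<in> sets K" and a: "0 \<le> a"
    and h: "\<And>x. x \<in> G \<Longrightarrow> 0 \<le> h x" "\<And>x. x \<in> G \<Longrightarrow> h x \<le> h' x + a"
    and h': "\<And>x. x \<in> G \<Longrightarrow> 0 \<le> h' x"
    and int: "emeasure K G < \<infinity> \<Longrightarrow> integrable K (\<lambda>x. indicator G x * h' x)"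
  shows "Av K G h \<le> Av K G h' + a"
proof -
  have nn: "0 \<le> Av K G h'" using h' by (rule Av_nonneg)
  show ?thesis
  proof (cases "emeasure K G = 0")
    case True then show ?thesis using nn a unfolding Av_def[of K G h] by simp
  next
    case False
    then have pos: "0 < emeasure K G" by (simp add: zero_less_iff_neq_zero)
    show ?thesis
    proof (cases "emeasure K G = \<infinity>")
      case True then have "measure K G = 0" by (simp add: measure_def)
      then show ?thesis using nn a unfolding Av_def[of K G h] by simp
    next
      case False
      have fin: "emeasure K G < \<infinity>" using \<open>emeasure K G \<noteq> \<infinity>\<close> by (simp add: less_top[symmetric])
      note 3 = pos fin
    have mpos: "0 < measure K G" using 3 by (simp add: measure_def enn2real_positive_iff)
    have i1: "integrable K (\<lambda>x. indicator G x * h' x)" by (rule int[OF 3(2)])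
    have i2: "integrable K (\<lambda>x. a * indicator G x)"
      by (rule integrable_mult_right) (rule integrable_real_indicator[OF G 3(2)])
    have iv: "integrable K (\<lambda>x. indicator G x * h' x + a * indicator G x)"
      by (rule Bochner_Integration.integrable_add[OF i1 i2])
    have "(\<integral>x. indicator G x * h x \<partial>K) \<le> (\<integral>x. indicator G x * h' x + a * indicator G x \<partial>K)"
    proof (rule integral_le_nonneg[OF _ _ iv])
      fix x
      show "0 \<le> indicator G x * h x" using h(1)[of x] by (simp add: indicator_def)
      show "indicator G x * h x \<le> indicator G x * h' x + a * indicator G x"
        using h(2)[of x] by (simp add: indicator_def)
    qed
    also have "\<dots> = (\<integral>x. indicator G x * h' x \<partial>K) + (\<integral>x. a * indicator G x \<partial>K)"
      by (rule Bochner_Integration.integral_add[OF i1 i2])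
    also have "(\<integral>x. a * indicator G x \<partial>K) = a * measure K G"
    proof -
      have "(\<integral>x. a * indicator G x \<partial>K) = a * (\<integral>x. indicator G x \<partial>K)" by (rule integral_mult_right_zero)
      also have "(\<integral>x. indicator G x \<partial>K) = measure K G"
        using sets.sets_into_space[OF G] by (simp add: Int_absorb2)
      finally show ?thesis .
    qed
    finally have le: "(\<integral>x. indicator G x * h x \<partial>K) \<le> (\<integral>x. indicator G x * h' x \<partial>K) + a * measure K G" .
    have "(\<integral>x. indicator G x * h x \<partial>K) / measure K G \<le>
        ((\<integral>x. indicator G x * h' x \<partial>K) + a * measure K G) / measure K G"
      using le mpos by (simp add: divide_right_mono)
    also have "\<dots> = (\<integral>x. indicator G x * h' x \<partial>K) / measure K G + a"
      using mpos by (simp add: add_divide_distrib)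
    finally show ?thesis unfolding Av_def using 3(1) by simp
    qed
  qed
qed

lemma integrable_abs_diff_const:
  fixes f :: "'a \<Rightarrow> real"
  assumes "integrable K (\<lambda>x. indicator G x * f x)" "G \<in> sets K" "emeasure K G < \<infinity>"
  shows "integrable K (\<lambda>x. indicator G x * \<bar>f x - c0\<bar>)"
proof -
  have "integrable K (\<lambda>x. \<bar>indicator G x * f x - c0 * indicator G x\<bar>)"
    using assms by (intro integrable_abs integrable_diff integrable_mult_right) auto
  moreover have "(\<lambda>x. \<bar>indicator G x * f x - c0 * indicator G x\<bar>) = (\<lambda>x. indicator G x * \<bar>f x - c0\<bar>)"
    by (auto simp: indicator_def)
  ultimately show ?thesis by simp
qed

context big begin

lemma f_meas:
  assumes f: "loc_integrable (MM \<theta> 0) f"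
  shows "f \<in> borel_measurable borel"
proof -
  fix x0 :: 'a
  let ?u = "\<lambda>n x. indicator (cball x0 (real n)) x *\<^sub>R f x"
  show ?thesis
  proof (rule borel_measurable_LIMSEQ_real[where u="?u"])
    fix n
    have "integrable (MM \<theta> 0) (?u n)" using f unfolding loc_integrable_def set_integrable_def by blast
    then have "?u n \<in> borel_measurable (MM \<theta> 0)" by blast
    then show "?u n \<in> borel_measurable borel" by (simp cong: measurable_cong_sets)
  next
    fix x :: 'a
    obtain n0 :: nat where n0: "dist x0 x \<le> real n0" using real_arch_simple by blast
    have "eventually (\<lambda>n. ?u n x = f x) sequentially"
      using n0 by (intro eventually_sequentiallyI[of n0]) (auto simp: indicator_def)
    then show "(\<lambda>n. ?u n x) \<longlonglongrightarrow> f x" by (rule tendsto_eventually)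
  qed
qed

lemma int_M:
  assumes f: "loc_integrable (MM \<theta> 0) f"
  shows "integrable (MM \<theta> k) (\<lambda>x. indicator (cball a \<rho>) x * f x)"
proof -
  have fm: "f \<in> borel_measurable borel" by (rule f_meas[OF f])
  have i0: "integrable (MM \<theta> 0) (\<lambda>x. indicator (cball a \<rho>) x * f x)"
    using f unfolding loc_integrable_def set_integrable_def by simp
  have "(\<integral>\<^sup>+x. ennreal (norm (indicator (cball a \<rho>) x * f x)) \<partial>MM \<theta> k)
      \<le> ennreal (\<Sum>l\<in>{1..N}. wt \<theta> k l) * (\<integral>\<^sup>+x. ennreal (norm (indicator (cball a \<rho>) x * f x)) \<partial>MM \<theta> 0)"
    by (rule dom2) (use fm in measurable)
  also have "\<dots> < \<infinity>"
    using i0 unfolding integrable_iff_bounded by (simp add: ennreal_mult_less_top)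
  finally show ?thesis unfolding integrable_iff_bounded using fm by simp
qed

lemma int_H:
  assumes f: "loc_integrable (MM \<theta> 0) f" and l: "l \<in> {1..N}"
  shows "integrable (H_meas \<mu> (th l)) (\<lambda>x. indicator (cball a \<rho> \<inter> S l) x * f x)"
proof -
  have fm: "f \<in> borel_measurable borel" by (rule f_meas[OF f])
  have i0: "integrable (MM \<theta> 0) (\<lambda>x. indicator (cball a \<rho>) x * f x)"
    using f unfolding loc_integrable_def set_integrable_def by simp
  have "(\<integral>\<^sup>+x. ennreal (norm (indicator (cball a \<rho> \<inter> S l) x * f x)) \<partial>H_meas \<mu> (th l))
      = (\<integral>\<^sup>+x. indicator (S l) x * ennreal (norm (indicator (cball a \<rho>) x * f x)) \<partial>H_meas \<mu> (th l))"
    by (intro nn_integral_cong) (auto simp: indicator_def)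
  also have "\<dots> = ennreal (wt \<theta> 0 l) * \<dots>" by simp
  also have "\<dots> \<le> (\<integral>\<^sup>+x. ennreal (norm (indicator (cball a \<rho>) x * f x)) \<partial>MM \<theta> 0)"
    by (rule dom1[OF l]) (use fm in measurable)
  also have "\<dots> < \<infinity>"
    using i0 unfolding integrable_iff_bounded by simp
  finally have fin: "(\<integral>\<^sup>+x. ennreal (norm (indicator (cball a \<rho> \<inter> S l) x * f x)) \<partial>H_meas \<mu> (th l)) < \<infinity>" .
  have "(\<lambda>x. indicator (cball a \<rho> \<inter> S l) x * f x) \<in> borel_measurable (H_meas \<mu> (th l))"
    using fm S_borel[OF l] by simp
  then show ?thesis unfolding integrable_iff_bounded using fin by simp
qed

end


lemma chain_arith:
  fixes IG IB w L hG \<kappa>1 \<mu>y \<rho> P mB N Q :: real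
  assumes "0 \<le> IG" "0 \<le> IB" "0 < w" "w * IG \<le> IB" "0 < \<kappa>1" "0 < \<mu>y" "0 < \<rho>"
    "\<kappa>1 * \<mu>y * \<rho> \<le> hG" "w * \<rho> = P" "0 < mB" "mB \<le> N * (Q * \<mu>y) * P" "0 < Q" "0 < N"
  shows "IG / hG \<le> (N * Q / \<kappa>1) * (IB / mB)"
proof -
  have L: "0 < \<kappa>1 * \<mu>y * \<rho>" using assms by simp
  have P: "0 < P" using assms by (metis mult_pos_pos)
  have "IG / hG \<le> IG / (\<kappa>1 * \<mu>y * \<rho>)"
  proof (rule divide_left_mono)
    show "0 \<le> IG" "\<kappa>1 * \<mu>y * \<rho> \<le> hG" using assms by auto
    have "0 < hG" using L assms(8) by linarith
    then show "0 < hG * (\<kappa>1 * \<mu>y * \<rho>)" using L by simp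
  qed
  also have "\<dots> = (w * IG) / (\<kappa>1 * \<mu>y * P)"
    using assms P by (simp add: field_simps)
  also have "\<dots> \<le> IB / (\<kappa>1 * \<mu>y * P)"
    using assms P by (intro divide_right_mono) auto
  also have "\<dots> = (N * Q / \<kappa>1) * (IB / (N * (Q * \<mu>y) * P))"
    using assms P by (simp add: field_simps)
  also have "\<dots> \<le> (N * Q / \<kappa>1) * (IB / mB)"
    using assms P by (intro mult_left_mono divide_left_mono) auto
  finally show ?thesis .
qed



context big begin

lemma StepAv:
  fixes f :: "'a \<Rightarrow> real"
  assumes f: "loc_integrable (MM \<theta> 0) f" and i: "i \<in> {1..N}" and y: "y \<in> S i"
    and sub: "cball y (2 powr (- real k)) \<subseteq> cball x (c * 2 powr (- real k))"
  shows "Av (H_meas \<mu> (th i)) (cball y (2 powr (- real k)) \<inter> S i) (\<lambda>x. \<bar>f x - c0\<bar>)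
     \<le> (real N * (D^m * (\<kappa>2 * D^m)) / \<kappa>1) * Av (MM \<theta> k) (cball x (c * 2 powr (- real k))) (\<lambda>x. \<bar>f x - c0\<bar>)"
proof -
  define r where "r = (2::real) powr (- real k)"
  have r: "0 < r" "r \<le> 1" unfolding r_def by (rule r_props)+
  define B where "B = cball x (c * r)"
  define G where "G = cball y r \<inter> S i"
  define H where "H = H_meas \<mu> (th i)"
  define M where "M = MM \<theta> k"
  define g where "g = (\<lambda>x. \<bar>f x - c0\<bar>)"
  define K1 where "K1 = real N * (D^m * (\<kappa>2 * D^m)) / \<kappa>1"
  have Npos: "0 < real N" using i by auto
  have K1: "0 \<le> K1" unfolding K1_def using k1 k2 D1 by simp
  have "y \<in> cball y r" using r by simp
  then have yB: "y \<in> cball x (c * r)" using sub unfolding r_def by blast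
  have GB: "G \<subseteq> B \<inter> S i" using sub unfolding G_def B_def r_def by auto
  have Gs: "G \<in> sets borel" unfolding G_def using S_borel[OF i] by simp
  have Bs: "B \<in> sets borel" unfolding B_def by simp
  have AvM: "0 \<le> Av M B g" unfolding g_def by (rule Av_nonneg) simp
  have fm: "f \<in> borel_measurable borel" by (rule f_meas[OF f])
  show ?thesis
  proof (cases "emeasure H G = 0 \<or> emeasure H G = \<infinity>")
    case True
    then have "Av H G g = 0" unfolding Av_def by (auto simp: measure_def)
    then have "Av H G g \<le> K1 * Av M B g" using K1 AvM by simp
    then show ?thesis unfolding K1_def H_def G_def g_def M_def B_def r_def .
  next
    case False
    then have HG: "0 < emeasure H G" "emeasure H G < \<infinity>"
      by (simp_all add: zero_less_iff_neq_zero less_top[symmetric])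
    define hG where "hG = measure H G"
    have eHG: "emeasure H G = ennreal hG" unfolding hG_def using HG(2)
      by (simp add: emeasure_eq_ennreal_measure less_top[symmetric])
    define \<mu>y where "\<mu>y = measure \<mu> (cball y r)"
    have \<mu>y: "0 < \<mu>y" unfolding \<mu>y_def using r by (intro measure_cball_pos) simp
    have "ennreal (\<kappa>1 * \<mu>y * r powr (- th i)) \<le> H_cod \<mu> (th i) G"
      unfolding \<mu>y_def G_def by (rule lowb[OF i y r])
    also have "\<dots> = emeasure H G" unfolding H_def using emeasure_H_meas_pos[OF HG(1)[unfolded H_def]] by simp
    finally have low: "\<kappa>1 * \<mu>y * r powr (- th i) \<le> hG"
      unfolding eHG by (simp add: ennreal_le_iff hG_def)
    have MBfin: "emeasure M B < \<infinity>" unfolding M_def B_def r_def using Mfinite yB[unfolded r_def] by blast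
    define mB where "mB = measure M B"
    have eMB: "emeasure M B = ennreal mB" unfolding mB_def using MBfin
      by (simp add: emeasure_eq_ennreal_measure less_top[symmetric])
    have "ennreal (wt \<theta> k i) * emeasure H G \<le> ennreal (wt \<theta> k i) * emeasure H (B \<inter> S i)"
      by (intro mult_left_mono emeasure_mono) (use GB S_borel[OF i] Bs in \<open>auto simp: H_def\<close>)
    also have "\<dots> \<le> emeasure M B"
      unfolding M_def MM_emeasure[OF Bs] H_def
      by (rule member_le_sum[OF i]) simp_all
    finally have "ennreal (wt \<theta> k i) * emeasure H G \<le> emeasure M B" .
    moreover have "0 < ennreal (wt \<theta> k i) * emeasure H G"
      using HG(1) wt_pos[of \<theta> k i] by (simp add: ennreal_zero_less_mult_iff)
    ultimately have "0 < emeasure M B" by (rule order.strict_trans2[rotated])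
    then have mB0: "0 < mB" unfolding eMB by simp
    have "ennreal mB \<le> ennreal (real N * (D^m * (\<kappa>2 * (D^m * \<mu>y)) * 2 powr (real k * \<theta>)))"
      unfolding eMB[symmetric] M_def B_def \<mu>y_def r_def by (rule Mbound[OF yB[unfolded r_def]])
    then have mBle: "mB \<le> real N * ((D^m * (\<kappa>2 * D^m)) * \<mu>y) * 2 powr (real k * \<theta>)"
      using \<mu>y k2 D1 by (simp add: ennreal_le_iff algebra_simps)
    have iG: "integrable H (\<lambda>x. indicator G x * g x)" unfolding g_def
      by (rule integrable_abs_diff_const) (use int_H[OF f i, of y r] HG(2) Gs in \<open>simp_all add: G_def H_def\<close>)
    have iB: "integrable M (\<lambda>x. indicator B x * g x)" unfolding g_def
      by (rule integrable_abs_diff_const) (use int_M[OF f, of k x "c*r"] MBfin Bs in \<open>simp_all add: B_def M_def\<close>)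
    define IG where "IG = (\<integral>x. indicator G x * g x \<partial>H)"
    define IB where "IB = (\<integral>x. indicator B x * g x \<partial>M)"
    have IG0: "0 \<le> IG" unfolding IG_def g_def by (intro integral_nonneg_AE AE_I2) simp
    have IB0: "0 \<le> IB" unfolding IB_def g_def by (intro integral_nonneg_AE AE_I2) simp
    have nnG: "(\<integral>\<^sup>+x. ennreal (indicator G x * g x) \<partial>H) = ennreal IG"
      unfolding IG_def by (rule nn_integral_eq_integral[OF iG]) (simp add: g_def)
    have nnB: "(\<integral>\<^sup>+x. ennreal (indicator B x * g x) \<partial>M) = ennreal IB"
      unfolding IB_def by (rule nn_integral_eq_integral[OF iB]) (simp add: g_def)
    have gm: "(\<lambda>x. ennreal (indicator B x * g x)) \<in> borel_measurable borel"
      unfolding g_def B_def using fm by measurable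
    have "(\<integral>\<^sup>+x. ennreal (indicator G x * g x) \<partial>H) \<le> (\<integral>\<^sup>+x. indicator (S i) x * ennreal (indicator B x * g x) \<partial>H)"
      by (intro nn_integral_mono) (use GB in \<open>auto simp: indicator_def g_def\<close>)
    then have "ennreal (wt \<theta> k i) * (\<integral>\<^sup>+x. ennreal (indicator G x * g x) \<partial>H)
       \<le> ennreal (wt \<theta> k i) * (\<integral>\<^sup>+x. indicator (S i) x * ennreal (indicator B x * g x) \<partial>H)"
      by (rule mult_left_mono) simp
    also have "\<dots> \<le> (\<integral>\<^sup>+x. ennreal (indicator B x * g x) \<partial>M)"
      unfolding H_def M_def by (rule dom1[OF i gm])
    finally have "ennreal (wt \<theta> k i * IG) \<le> ennreal IB"
      unfolding nnG nnB using wt_pos[of \<theta> k i] IG0 by (simp add: ennreal_mult)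
    then have key: "wt \<theta> k i * IG \<le> IB" using IB0 by (simp add: ennreal_le_iff)
    have "IG / hG \<le> (real N * (D^m * (\<kappa>2 * D^m)) / \<kappa>1) * (IB / mB)"
    proof (rule chain_arith[where w="wt \<theta> k i" and \<rho>="r powr (- th i)" and P="2 powr (real k * \<theta>)"])
      show "0 \<le> IG" "0 \<le> IB" "0 < wt \<theta> k i" "wt \<theta> k i * IG \<le> IB" "0 < \<kappa>1" "0 < \<mu>y"
        "0 < r powr (- th i)" "\<kappa>1 * \<mu>y * r powr (- th i) \<le> hG" "0 < mB"
        using IG0 IB0 wt_pos key k1 \<mu>y r low mB0 by simp_all
      show "wt \<theta> k i * r powr (- th i) = 2 powr (real k * \<theta>)" unfolding r_def by (rule wt_powr)
      show "mB \<le> real N * ((D^m * (\<kappa>2 * D^m)) * \<mu>y) * 2 powr (real k * \<theta>)" by (rule mBle)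
      show "0 < D^m * (\<kappa>2 * D^m)" using D1 k2 by simp
      show "0 < real N" by (rule Npos)
    qed
    moreover have "Av H G g = IG / hG" unfolding Av_def IG_def hG_def using HG(1) by simp
    moreover have "Av M B g = IB / mB" unfolding Av_def IB_def mB_def using \<open>0 < emeasure M B\<close> by simp
    ultimately have "Av H G g \<le> K1 * Av M B g" unfolding K1_def by simp
    then show ?thesis unfolding K1_def H_def G_def g_def M_def B_def r_def .
  qed
qed

end


context big begin

lemma MainIneq:
  fixes f :: "'a \<Rightarrow> real"
  assumes f: "loc_integrable (MM \<theta> 0) f" and i: "i \<in> {1..N}" and j: "j \<in> {1..N}"
    and y: "y \<in> S i" and z: "z \<in> S j"
    and suby: "cball y (2 powr (- real k)) \<subseteq> cball x (c * 2 powr (- real k))"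
    and subz: "cball z (2 powr (- real k)) \<subseteq> cball x (c * 2 powr (- real k))"
  shows "A_ijk \<mu> th S i j k f y z \<le> (2 * (real N * (D^m * (\<kappa>2 * D^m)) / \<kappa>1)) * Osc (MM \<theta> k) f (cball x (c * 2 powr (- real k)))"
proof -
  define r where "r = (2::real) powr (- real k)"
  have r: "0 < r" "r \<le> 1" unfolding r_def by (rule r_props)+
  define K1 where "K1 = real N * (D^m * (\<kappa>2 * D^m)) / \<kappa>1"
  have K1: "0 < K1" unfolding K1_def using k1 k2 D1 i by auto
  define Gi where "Gi = cball y r \<inter> S i"
  define Gj where "Gj = cball z r \<inter> S j"
  define Hi where "Hi = H_meas \<mu> (th i)"
  define Hj where "Hj = H_meas \<mu> (th j)"
  define M where "M = MM \<theta> k"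
  define B where "B = cball x (c * r)"
  define A where "A = A_ijk \<mu> th S i j k f y z"
  have Aeq: "A = Av Hi Gi (\<lambda>y'. Av Hj Gj (\<lambda>z'. \<bar>f y' - f z'\<bar>))"
    unfolding A_def A_ijk_def Hi_def Hj_def Gi_def Gj_def r_def ..
  have Gis: "Gi \<in> sets Hi" unfolding Gi_def Hi_def using S_borel[OF i] by simp
  have Gjs: "Gj \<in> sets Hj" unfolding Gj_def Hj_def using S_borel[OF j] by simp
  have bound: "A \<le> 2 * K1 * Av M B (\<lambda>x. \<bar>f x - c0\<bar>)" for c0
  proof -
    define g where "g = (\<lambda>x. \<bar>f x - c0\<bar>)"
    have intj: "integrable Hj (\<lambda>x. indicator Gj x * g x)" if "emeasure Hj Gj < \<infinity>"
      unfolding g_def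
      by (rule integrable_abs_diff_const) (use int_H[OF f j, of z r] that Gjs in \<open>simp_all add: Gj_def Hj_def\<close>)
    have inti: "integrable Hi (\<lambda>x. indicator Gi x * g x)" if "emeasure Hi Gi < \<infinity>"
      unfolding g_def
      by (rule integrable_abs_diff_const) (use int_H[OF f i, of y r] that Gis in \<open>simp_all add: Gi_def Hi_def\<close>)
    have inner: "Av Hj Gj (\<lambda>z'. \<bar>f y' - f z'\<bar>) \<le> Av Hj Gj g + g y'" for y'
    proof (rule Av_mono_plus[OF Gjs])
      show "0 \<le> g y'" unfolding g_def by simp
      fix x
      show "0 \<le> \<bar>f y' - f x\<bar>" by simp
      show "\<bar>f y' - f x\<bar> \<le> g x + g y'" unfolding g_def by linarith
      show "0 \<le> g x" unfolding g_def by simp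
    qed (rule intj)
    have "A \<le> Av Hi Gi g + Av Hj Gj g" unfolding Aeq
    proof (rule Av_mono_plus[OF Gis])
      show "0 \<le> Av Hj Gj g" by (rule Av_nonneg) (simp add: g_def)
      fix x
      show "0 \<le> Av Hj Gj (\<lambda>z'. \<bar>f x - f z'\<bar>)" by (rule Av_nonneg) simp
      show "Av Hj Gj (\<lambda>z'. \<bar>f x - f z'\<bar>) \<le> g x + Av Hj Gj g" using inner[of x] by simp
      show "0 \<le> g x" unfolding g_def by simp
    qed (rule inti)
    also have "Av Hi Gi g \<le> K1 * Av M B g"
      using StepAv[OF f i y suby, of c0] unfolding K1_def Hi_def Gi_def M_def B_def g_def r_def .
    also have "Av Hj Gj g \<le> K1 * Av M B g"
      using StepAv[OF f j z subz, of c0] unfolding K1_def Hj_def Gj_def M_def B_def g_def r_def .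
    finally show ?thesis unfolding g_def by simp
  qed
  have "A / (2 * K1) \<le> Osc M f B"
    unfolding Osc_def
  proof (rule cINF_greatest)
    fix c0 :: real
    show "A / (2 * K1) \<le> Av M B (\<lambda>x. \<bar>f x - c0\<bar>)"
      using bound[of c0] K1 by (simp add: divide_le_eq mult.commute)
  qed simp
  then have "A \<le> 2 * K1 * Osc M f B" using K1 by (simp add: divide_le_eq mult.commute)
  then show ?thesis unfolding A_def K1_def M_def B_def r_def .
qed

end


theorem lemma3p3:
  fixes \<mu> :: "'a::polish_space measure"
    and p \<theta>low \<theta> :: real and N :: nat and th :: "nat \<Rightarrow> real" and S :: "nat \<Rightarrow> 'a set"
  assumes "loc_finite_full_support \<mu>"
    and "unif_loc_doubling \<mu>"
    and "1 < p"
    and "weak_local_poincare \<mu> p"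
    and "0 \<le> \<theta>low" and "\<theta>low < min p (Q_lower \<mu>)"
    and "\<theta>low \<le> \<theta>" and "\<theta> < p"
    and "2 \<le> N"
    and "0 \<le> th 1"
    and "\<And>i j. 1 \<le> i \<Longrightarrow> i < j \<Longrightarrow> j \<le> N \<Longrightarrow> th i < th j"
    and "th N = \<theta>low"
    and "\<And>i. 1 \<le> i \<Longrightarrow> i \<le> N \<Longrightarrow> ADR \<mu> (th i) (S i)"
  shows "\<forall>c\<ge>1. \<exists>C>0. \<forall>i\<in>{1..N}. \<forall>j\<in>{1..N}. \<forall>k::nat. \<forall>y\<in>S i. \<forall>z\<in>S j.
           dist y z \<le> 2 powr (- real k) \<longrightarrow>
           (\<forall>f. loc_integrable (m_k \<mu> N \<theta> th S 0) f \<longrightarrow>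
             (\<forall>x. cball y (2 powr (- real k)) \<subseteq> cball x (c * 2 powr (- real k)) \<and>
                  cball z (2 powr (- real k)) \<subseteq> cball x (c * 2 powr (- real k)) \<longrightarrow>
                  A_ijk \<mu> th S i j k f y z \<le> C * Osc (m_k \<mu> N \<theta> th S k) f (cball x (c * 2 powr (- real k)))))"
proof (intro allI impI)
  fix c :: real assume c1: "1 \<le> c"
  have ms: "msetting \<mu>" by (rule msetting.intro) (fact assms(1,2))+
  have N1: "1 \<le> N" using assms(9) by simp
  have adr: "\<forall>l\<in>{1..N}. \<exists>k1 k2. 0 < k1 \<and> 0 < k2 \<and> (\<forall>x\<in>S l. \<forall>r::real. 0 < r \<and> r \<le> 1 \<longrightarrow>
         ennreal (k1 * measure \<mu> (cball x r) * r powr (- th l)) \<le> H_cod \<mu> (th l) (cball x r \<inter> S l) \<and>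
         H_cod \<mu> (th l) (cball x r \<inter> S l) \<le> ennreal (k2 * measure \<mu> (cball x r) * r powr (- th l)))"
    using assms(13) unfolding ADR_def by auto
  from bchoice[OF adr] obtain k1 where k1def: "\<forall>l\<in>{1..N}. \<exists>k2. 0 < k1 l \<and> 0 < k2 \<and> (\<forall>x\<in>S l. \<forall>r::real. 0 < r \<and> r \<le> 1 \<longrightarrow>
         ennreal (k1 l * measure \<mu> (cball x r) * r powr (- th l)) \<le> H_cod \<mu> (th l) (cball x r \<inter> S l) \<and>
         H_cod \<mu> (th l) (cball x r \<inter> S l) \<le> ennreal (k2 * measure \<mu> (cball x r) * r powr (- th l)))"
    by blast
  from bchoice[OF k1def] obtain k2 where kk: "\<forall>l\<in>{1..N}. 0 < k1 l \<and> 0 < k2 l \<and> (\<forall>x\<in>S l. \<forall>r::real. 0 < r \<and> r \<le> 1 \<longrightarrow>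
         ennreal (k1 l * measure \<mu> (cball x r) * r powr (- th l)) \<le> H_cod \<mu> (th l) (cball x r \<inter> S l) \<and>
         H_cod \<mu> (th l) (cball x r \<inter> S l) \<le> ennreal (k2 l * measure \<mu> (cball x r) * r powr (- th l)))"
    by blast
  define \<kappa>1 where "\<kappa>1 = Min (k1 ` {1..N})"
  define \<kappa>2 where "\<kappa>2 = (\<Sum>l\<in>{1..N}. k2 l)"
  have fin: "finite (k1 ` {1..N})" "k1 ` {1..N} \<noteq> {}" using N1 by auto
  have k1pos: "0 < \<kappa>1" unfolding \<kappa>1_def using fin kk by (subst Min_gr_iff) auto
  have k1le: "\<kappa>1 \<le> k1 l" if "l \<in> {1..N}" for l unfolding \<kappa>1_def using fin that by (intro Min_le) auto
  have k2ge: "k2 l \<le> \<kappa>2" if "l \<in> {1..N}" for l unfolding \<kappa>2_def using kk that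
    by (intro member_le_sum) (auto intro: less_imp_le)
  have k2pos: "0 < \<kappa>2" using k2ge[of 1] kk N1 by force
  obtain m :: nat where m: "9 * c < 2^m" using real_arch_pow[of 2 "9*c"] by auto
  obtain D where D: "D \<ge> 1" "\<forall>x \<rho> j. 0 < \<rho> \<and> 2^j * \<rho> \<le> (2::real)^m \<longrightarrow>
     measure \<mu> (cball x (2^j * \<rho>)) \<le> D^j * measure \<mu> (cball x \<rho>)"
    using msetting.doubling_iter_real[OF ms, of "2^m"] by auto
  have thnn: "0 \<le> th l" if "l \<in> {1..N}" for l
  proof (cases "l = 1")
    case True then show ?thesis using assms(10) by simp
  next
    case False then have "th 1 < th l" using that by (intro assms(11)) auto
    then show ?thesis using assms(10) by simp
  qed
  interpret big \<mu> N th S c \<kappa>1 \<kappa>2 D m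
  proof (unfold_locales)
    show "loc_finite_full_support \<mu>" "unif_loc_doubling \<mu>" by (fact assms(1,2))+
    show "\<And>l. l \<in> {1..N} \<Longrightarrow> 0 \<le> th l" by (rule thnn)
    show "\<And>l. l \<in> {1..N} \<Longrightarrow> closed (S l)" using assms(13) unfolding ADR_def by auto
    show "1 \<le> c" by (rule c1)
    show "0 < \<kappa>1" "0 < \<kappa>2" by (fact k1pos k2pos)+
    show "9 * c \<le> 2^m" using m by simp
    show "1 \<le> D" by (rule D(1))
    show "\<And>x \<rho> j. 0 < \<rho> \<Longrightarrow> 2^j * \<rho> \<le> 2^m \<Longrightarrow>
         measure \<mu> (cball x (2^j * \<rho>)) \<le> D^j * measure \<mu> (cball x \<rho>)" using D(2) by blast
  next
    fix l x and r :: real assume l: "l \<in> {1..N}" and x: "x \<in> S l" and r: "0 < r" "r \<le> 1"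
    have mnn: "0 \<le> measure \<mu> (cball x r) * r powr (- th l)" by simp
    have "ennreal (\<kappa>1 * measure \<mu> (cball x r) * r powr (- th l)) \<le> ennreal (k1 l * measure \<mu> (cball x r) * r powr (- th l))"
      using k1le[OF l] mnn by (intro ennreal_leI) (simp add: mult.assoc mult_right_mono)
    also have "\<dots> \<le> H_cod \<mu> (th l) (cball x r \<inter> S l)" using kk l x r by blast
    finally show "ennreal (\<kappa>1 * measure \<mu> (cball x r) * r powr (- th l)) \<le> H_cod \<mu> (th l) (cball x r \<inter> S l)" .
    have "H_cod \<mu> (th l) (cball x r \<inter> S l) \<le> ennreal (k2 l * measure \<mu> (cball x r) * r powr (- th l))"
      using kk l x r by blast
    also have "\<dots> \<le> ennreal (\<kappa>2 * measure \<mu> (cball x r) * r powr (- th l))"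
      using k2ge[OF l] mnn by (intro ennreal_leI) (simp add: mult.assoc mult_right_mono)
    finally show "H_cod \<mu> (th l) (cball x r \<inter> S l) \<le> ennreal (\<kappa>2 * measure \<mu> (cball x r) * r powr (- th l))" .
  qed
  define C where "C = 2 * (real N * (D^m * (\<kappa>2 * D^m)) / \<kappa>1)"
  have C: "0 < C" unfolding C_def using k1pos k2pos D(1) N1 by simp
  show "\<exists>C>0. \<forall>i\<in>{1..N}. \<forall>j\<in>{1..N}. \<forall>k::nat. \<forall>y\<in>S i. \<forall>z\<in>S j.
           dist y z \<le> 2 powr (- real k) \<longrightarrow>
           (\<forall>f. loc_integrable (m_k \<mu> N \<theta> th S 0) f \<longrightarrow>
             (\<forall>x. cball y (2 powr (- real k)) \<subseteq> cball x (c * 2 powr (- real k)) \<and>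
                  cball z (2 powr (- real k)) \<subseteq> cball x (c * 2 powr (- real k)) \<longrightarrow>
                  A_ijk \<mu> th S i j k f y z \<le> C * Osc (m_k \<mu> N \<theta> th S k) f (cball x (c * 2 powr (- real k)))))"
    using C MainIneq unfolding C_def by blast
qed



end
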